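(* In the baseline dynamic game described in the context (standing assumptions (A1)–(A4), any $\delta\in[0,1)$), for any seller strategy and any buyer strategy that is a best response to it for every type, the seller's expected discounted payoff is at most $\pi(F)$.
   Context: Fix $\underline{\theta}<\overline{\theta}$ and $0<\underline{x}<\overline{x}$. The buyer's private type $\theta\in[\underline{\theta},\overline{\theta}]$ has CDF $F$ and density $f$ (total mass one). Let $v:[0,\overline{x}]\to\mathbb{R}$ be strictly concave, continuously differentiable, $v(0)=0$ (A1). For $x\in[\underline{x},\overline{x}]$, $u(x,\theta)=\max_{0\le x'\le x}[v(x')+\theta x']$; $x^e(\theta)$ is the unique maximizer of $v(x')+\theta x'$ over $[0,\overline{x}]$. Standing assumptions: (A2) $0<m\le f\le M$ for constants $m,M$, and $\theta-\frac{1-F(\theta)}{f(\theta)}$ strictly increasing; (A3) $0<x^e(\underline{\theta})\le\underline{x}$; (A4) $v(x^e(\theta))+\big(\theta-\frac{1-F(\theta)}{f(\theta)}\big)x^e(\theta)\ge0$ for all $\theta$. Static benchmark: a mechanism assigns each type $\theta$ a trade probability $q(\theta)\in[0,1]$, a distribution over allocations $x(\theta)\in[\underline{x},\overline{x}]$ and a payment $p(\theta)$; it is incentive compatible if $q(\theta)\mathbb{E}[u(x(\theta),\theta)]-p(\theta)\ge q(\theta')\mathbb{E}[u(x(\theta'),\theta)]-p(\theta')$ for all $\theta,\theta'$, individually rational if $q(\theta)\mathbb{E}[u(x(\theta),\theta)]-p(\theta)\ge0$. $\pi(F)$ is the maximal expected revenue $\int p\,dF$ over IC and IR mechanisms. Dynamic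 game: discrete time $t=0,1,\dots$, discount factor $\delta\in[0,1)$. Each period the seller (possibly randomizing, as a function of the history of past offers and decisions) posts one offer $(x_t,p_t)\in[\underline{x},\overline{x}]\times\mathbb{R}$; a buyer who has not purchased accepts or waits (measurably in type, mixing allowed). Acceptance by type $\theta$ at $t$ gives buyer $\delta^t(u(x_t,\theta)-p_t)$ and seller $\delta^tp_t$ and ends the game for that buyer; no purchase gives both $0$. The seller's expected payoff integrates over types according to $F$. *)

theory Defs
  imports "HOL-Probability.Probability"
begin

definition strict_concave_on :: "real set \<Rightarrow> (real \<Rightarrow> real) \<Rightarrow> bool" where
  "strict_concave_on S g \<longleftrightarrow> convex S \<and>
     (\<forall>x\<in>S. \<forall>y\<in>S. x \<noteq> y \<longrightarrow> (\<forall>t::real. 0 < t \<and> t < 1 \<longrightarrow>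
        g ((1 - t) * x + t * y) > (1 - t) * g x + t * g y))"

definition C1_on_interval :: "real \<Rightarrow> real \<Rightarrow> (real \<Rightarrow> real) \<Rightarrow> bool" where
  "C1_on_interval a b g \<longleftrightarrow> (\<exists>g'. (\<forall>x\<in>{a..b}. (g has_real_derivative g' x) (at x within {a..b}))
                                \<and> continuous_on {a..b} g')"

definition util :: "(real \<Rightarrow> real) \<Rightarrow> real \<Rightarrow> real \<Rightarrow> real" where
  "util v x \<theta> = Sup ((\<lambda>x'. v x' + \<theta> * x') ` {0..x})"

definition xeff :: "(real \<Rightarrow> real) \<Rightarrow> real \<Rightarrow> real \<Rightarrow> real" where
  "xeff v xh \<theta> = (THE y. y \<in> {0..xh} \<and> (\<forall>z\<in>{0..xh}. v z + \<theta> * z \<le> v y + \<theta> * y))"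

definition virt :: "(real \<Rightarrow> real) \<Rightarrow> (real \<Rightarrow> real) \<Rightarrow> real \<Rightarrow> real" where
  "virt F f \<theta> = \<theta> - (1 - F \<theta>) / f \<theta>"

definition typeM :: "real \<Rightarrow> real \<Rightarrow> (real \<Rightarrow> real) \<Rightarrow> real measure" where
  "typeM tlo thi f = density lborel (\<lambda>\<theta>. ennreal (indicator {tlo..thi} \<theta> * f \<theta>))"

definition A1 :: "real \<Rightarrow> (real \<Rightarrow> real) \<Rightarrow> bool" where
  "A1 xh v \<longleftrightarrow> strict_concave_on {0..xh} v \<and> C1_on_interval 0 xh v \<and> v 0 = 0"

definition A2 :: "real \<Rightarrow> real \<Rightarrow> (real \<Rightarrow> real) \<Rightarrow> (real \<Rightarrow> real) \<Rightarrow> bool" where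
  "A2 tlo thi F f \<longleftrightarrow>
     f \<in> borel_measurable borel \<and>
     (\<forall>\<theta>\<in>{tlo..thi}. F \<theta> = (LINT t:{tlo..\<theta>}|lborel. f t)) \<and> F thi = 1 \<and>
     (\<exists>m M. 0 < m \<and> (\<forall>\<theta>\<in>{tlo..thi}. m \<le> f \<theta> \<and> f \<theta> \<le> M)) \<and>
     strict_mono_on {tlo..thi} (virt F f)"

definition A3 :: "real \<Rightarrow> real \<Rightarrow> real \<Rightarrow> (real \<Rightarrow> real) \<Rightarrow> bool" where
  "A3 tlo xl xh v \<longleftrightarrow> 0 < xeff v xh tlo \<and> xeff v xh tlo \<le> xl"

definition A4 :: "real \<Rightarrow> real \<Rightarrow> real \<Rightarrow> (real \<Rightarrow> real) \<Rightarrow> (real \<Rightarrow> real) \<Rightarrow> (real \<Rightarrow> real) \<Rightarrow> bool" where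
  "A4 tlo thi xh F f v \<longleftrightarrow>
     (\<forall>\<theta>\<in>{tlo..thi}. v (xeff v xh \<theta>) + virt F f \<theta> * xeff v xh \<theta> \<ge> 0)"

text \<open>Expected utility of type theta from a lottery X over allocations in [xl,xh]
  (the integrand is evaluated at the allocation clamped to [xl,xh], which changes nothing
   since X is concentrated on [xl,xh], but makes the integrand globally measurable).\<close>
definition exp_util :: "real \<Rightarrow> real \<Rightarrow> (real \<Rightarrow> real) \<Rightarrow> real measure \<Rightarrow> real \<Rightarrow> real" where
  "exp_util xl xh v X \<theta> = (LINT x|X. util v (max xl (min xh x)) \<theta>)"

text \<open>A (direct) mechanism: trade probability q, allocation lottery X, payment p.\<close>
definition mechanism :: "real \<Rightarrow> real \<Rightarrow> real \<Rightarrow> real \<Rightarrow> (real \<Rightarrow> real) \<Rightarrow> (real \<Rightarrow> real measure) \<Rightarrow> bool" where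
  "mechanism tlo thi xl xh q X \<longleftrightarrow>
     (\<forall>\<theta>\<in>{tlo..thi}. 0 \<le> q \<theta> \<and> q \<theta> \<le> 1 \<and> prob_space (X \<theta>) \<and>
        sets (X \<theta>) = sets (borel :: real measure) \<and> (AE x in X \<theta>. x \<in> {xl..xh}))"

definition IC :: "real \<Rightarrow> real \<Rightarrow> real \<Rightarrow> real \<Rightarrow> (real \<Rightarrow> real) \<Rightarrow> (real \<Rightarrow> real) \<Rightarrow> (real \<Rightarrow> real measure) \<Rightarrow> (real \<Rightarrow> real) \<Rightarrow> bool" where
  "IC tlo thi xl xh v q X p \<longleftrightarrow>
     (\<forall>\<theta>\<in>{tlo..thi}. \<forall>\<theta>'\<in>{tlo..thi}.
        q \<theta> * exp_util xl xh v (X \<theta>) \<theta> - p \<theta> \<ge> q \<theta>' * exp_util xl xh v (X \<theta>') \<theta> - p \<theta>')"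

definition IR :: "real \<Rightarrow> real \<Rightarrow> real \<Rightarrow> real \<Rightarrow> (real \<Rightarrow> real) \<Rightarrow> (real \<Rightarrow> real) \<Rightarrow> (real \<Rightarrow> real measure) \<Rightarrow> (real \<Rightarrow> real) \<Rightarrow> bool" where
  "IR tlo thi xl xh v q X p \<longleftrightarrow> (\<forall>\<theta>\<in>{tlo..thi}. q \<theta> * exp_util xl xh v (X \<theta>) \<theta> - p \<theta> \<ge> 0)"

text \<open>pi(F): the supremum of expected revenue over IC and IR mechanisms
  (whose payment rule is integrable, so that expected revenue is defined).\<close>
definition static_rev :: "real \<Rightarrow> real \<Rightarrow> real \<Rightarrow> real \<Rightarrow> (real \<Rightarrow> real) \<Rightarrow> (real \<Rightarrow> real) \<Rightarrow> real" where
  "static_rev tlo thi xl xh f v = Sup {(LINT \<theta>|typeM tlo thi f. p \<theta>) | q X p.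
       mechanism tlo thi xl xh q X \<and> IC tlo thi xl xh v q X p \<and> IR tlo thi xl xh v q X p \<and>
       integrable (typeM tlo thi f) p}"

type_synonym offers = "nat \<Rightarrow> real \<times> real"

definition OffersM :: "offers measure" where
  "OffersM = PiM UNIV (\<lambda>_. borel)"

text \<open>Before acceptance the seller's history consists of past offers and
  rejections only, so a (randomised, history-dependent) behaviour strategy of the seller is
  (via Ionescu-Tulcea / Kuhn) the same thing as a probability distribution over offer sequences;
  allocations are in [xl,xh].\<close>
definition seller_strategy :: "real \<Rightarrow> real \<Rightarrow> offers measure \<Rightarrow> bool" where
  "seller_strategy xl xh \<mu> \<longleftrightarrow> prob_space \<mu> \<and> sets \<mu> = sets OffersM \<and>
     (AE s in \<mu>. \<forall>t. fst (s t) \<in> {xl..xh})"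

text \<open>A buyer strategy of a single type: b t s is the probability of accepting at period t
  (given no earlier purchase), depending only on the offers s 0, ..., s t, measurably.\<close>
definition buyer_rule :: "(nat \<Rightarrow> offers \<Rightarrow> real) \<Rightarrow> bool" where
  "buyer_rule b \<longleftrightarrow> (\<forall>t s. 0 \<le> b t s \<and> b t s \<le> 1) \<and>
     (\<forall>t s s'. (\<forall>k\<le>t. s k = s' k) \<longrightarrow> b t s = b t s') \<and>
     (\<forall>t. b t \<in> borel_measurable OffersM)"

definition buyer_strategy :: "(real \<Rightarrow> nat \<Rightarrow> offers \<Rightarrow> real) \<Rightarrow> bool" where
  "buyer_strategy \<beta> \<longleftrightarrow> (\<forall>\<theta>. buyer_rule (\<beta> \<theta>)) \<and>
     (\<forall>t. (\<lambda>(\<theta>, s). \<beta> \<theta> t s) \<in> borel_measurable (borel \<Otimes>\<^sub>M OffersM))"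

definition acc_prob :: "(nat \<Rightarrow> offers \<Rightarrow> real) \<Rightarrow> nat \<Rightarrow> offers \<Rightarrow> real" where
  "acc_prob b t s = b t s * (\<Prod>k<t. 1 - b k s)"

definition PathTimeM :: "offers measure \<Rightarrow> (offers \<times> nat) measure" where
  "PathTimeM \<mu> = \<mu> \<Otimes>\<^sub>M count_space UNIV"

definition buyer_flow :: "real \<Rightarrow> real \<Rightarrow> (real \<Rightarrow> real) \<Rightarrow> real \<Rightarrow> real \<Rightarrow> (nat \<Rightarrow> offers \<Rightarrow> real) \<Rightarrow> offers \<times> nat \<Rightarrow> real" where
  "buyer_flow xl xh v \<delta> \<theta> b = (\<lambda>(s, t). \<delta> ^ t * acc_prob b t s * (util v (max xl (min xh (fst (s t)))) \<theta> - snd (s t)))"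

definition buyer_payoff :: "real \<Rightarrow> real \<Rightarrow> (real \<Rightarrow> real) \<Rightarrow> real \<Rightarrow> offers measure \<Rightarrow> real \<Rightarrow> (nat \<Rightarrow> offers \<Rightarrow> real) \<Rightarrow> real" where
  "buyer_payoff xl xh v \<delta> \<mu> \<theta> b = (LINT z|PathTimeM \<mu>. buyer_flow xl xh v \<delta> \<theta> b z)"

definition best_response :: "real \<Rightarrow> real \<Rightarrow> (real \<Rightarrow> real) \<Rightarrow> real \<Rightarrow> offers measure \<Rightarrow> real \<Rightarrow> (nat \<Rightarrow> offers \<Rightarrow> real) \<Rightarrow> bool" where
  "best_response xl xh v \<delta> \<mu> \<theta> b \<longleftrightarrow> buyer_rule b \<and>
     integrable (PathTimeM \<mu>) (buyer_flow xl xh v \<delta> \<theta> b) \<and>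
     (\<forall>b'. buyer_rule b' \<and> integrable (PathTimeM \<mu>) (buyer_flow xl xh v \<delta> \<theta> b') \<longrightarrow>
        buyer_payoff xl xh v \<delta> \<mu> \<theta> b' \<le> buyer_payoff xl xh v \<delta> \<mu> \<theta> b)"

definition seller_flow :: "real \<Rightarrow> (real \<Rightarrow> nat \<Rightarrow> offers \<Rightarrow> real) \<Rightarrow> real \<times> (offers \<times> nat) \<Rightarrow> real" where
  "seller_flow \<delta> \<beta> = (\<lambda>(\<theta>, (s, t)). \<delta> ^ t * acc_prob (\<beta> \<theta>) t s * snd (s t))"

definition seller_payoff :: "real \<Rightarrow> real \<Rightarrow> (real \<Rightarrow> real) \<Rightarrow> real \<Rightarrow> offers measure \<Rightarrow> (real \<Rightarrow> nat \<Rightarrow> offers \<Rightarrow> real) \<Rightarrow> real" where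
  "seller_payoff tlo thi f \<delta> \<mu> \<beta> = (LINT z|(typeM tlo thi f \<Otimes>\<^sub>M PathTimeM \<mu>). seller_flow \<delta> \<beta> z)"

end

theory Submission
  imports Defs
begin


lemma acc_sum:
  assumes "\<forall>k. 0 \<le> b k s \<and> b k s \<le> 1"
  shows "(\<Sum>t<n. acc_prob b t s) = 1 - (\<Prod>k<n. 1 - b k s)"
proof (induction n)
  case 0 then show ?case by simp
next
  case (Suc n) then show ?case by (simp add: acc_prob_def algebra_simps)
qed

lemma acc_nonneg:
  assumes "\<forall>k. 0 \<le> b k s \<and> b k s \<le> 1"
  shows "0 \<le> acc_prob b t s"
  using assms unfolding acc_prob_def by (auto intro!: mult_nonneg_nonneg prod_nonneg)

lemma acc_sum_le1:
  assumes "\<forall>k. 0 \<le> b k s \<and> b k s \<le> 1"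
  shows "(\<Sum>t<n. acc_prob b t s) \<le> 1"
  unfolding acc_sum[of b s n, OF assms] using assms by (auto intro!: prod_nonneg)

lemma util_bound:
  assumes K: "\<forall>x\<in>{0..xh}. \<bar>v x\<bar> \<le> K" and y: "0 \<le> y" "y \<le> xh"
  shows "\<bar>util v y \<theta>\<bar> \<le> K + \<bar>\<theta>\<bar> * xh"
proof -
  let ?S = "(\<lambda>x'. v x' + \<theta> * x') ` {0..y}"
  have b: "\<bar>e\<bar> \<le> K + \<bar>\<theta>\<bar> * xh" if e: "e \<in> ?S" for e
  proof -
    obtain x' where x': "x' \<in> {0..y}" "e = v x' + \<theta> * x'" using e by auto
    have "\<bar>\<theta> * x'\<bar> \<le> \<bar>\<theta>\<bar> * xh" using x' y by (auto simp: abs_mult intro!: mult_left_mono)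
    moreover have "\<bar>v x'\<bar> \<le> K" using K x' y by auto
    ultimately show ?thesis using x' by linarith
  qed
  have ne: "?S \<noteq> {}" using y by auto
  have bdd: "bdd_above ?S" using b by (intro bdd_aboveI[of _ "K + \<bar>\<theta>\<bar> * xh"]) fastforce
  have "Sup ?S \<le> K + \<bar>\<theta>\<bar> * xh" using b ne by (intro cSup_least) fastforce+
  moreover have mem: "v 0 + \<theta> * 0 \<in> ?S" by (rule image_eqI[of _ _ 0]) (use y in auto)
  then have "v 0 + \<theta> * 0 \<le> Sup ?S" using bdd by (intro cSup_upper) auto
  moreover have "\<bar>v 0 + \<theta> * 0\<bar> \<le> K + \<bar>\<theta>\<bar> * xh" by (rule b[OF mem])
  ultimately show ?thesis unfolding util_def by linarith
qed

lemma util_mono: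
  assumes K: "\<forall>x\<in>{0..xh}. \<bar>v x\<bar> \<le> K" and y: "0 \<le> a" "a \<le> b" "b \<le> xh"
  shows "util v a \<theta> \<le> util v b \<theta>"
proof -
  let ?S = "\<lambda>y. (\<lambda>x'. v x' + \<theta> * x') ` {0..y}"
  have bdd: "bdd_above (?S b)"
  proof (intro bdd_aboveI[of _ "K + \<bar>\<theta>\<bar> * xh"])
    fix e assume "e \<in> ?S b"
    then obtain x' where x': "x' \<in> {0..b}" "e = v x' + \<theta> * x'" by auto
    have "\<bar>\<theta> * x'\<bar> \<le> \<bar>\<theta>\<bar> * xh" using x' y by (auto simp: abs_mult intro!: mult_left_mono)
    moreover have "\<bar>v x'\<bar> \<le> K" using K x' y by auto
    ultimately show "e \<le> K + \<bar>\<theta>\<bar> * xh" using x' by linarith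
  qed
  show ?thesis unfolding util_def using y bdd by (intro cSup_subset_mono) auto
qed

lemma comp_meas0: "(\<lambda>s. s t) \<in> OffersM \<rightarrow>\<^sub>M borel"
  unfolding OffersM_def by (rule measurable_component_singleton) simp

lemma comp_meas: "(\<lambda>s. fst (s t)) \<in> borel_measurable OffersM" "(\<lambda>s. snd (s t)) \<in> borel_measurable OffersM"
  by (rule measurable_compose[OF comp_meas0], intro borel_measurable_continuous_onI continuous_intros)+

lemma meas_PT:
  assumes "sets \<mu> = sets OffersM" "\<And>t. h t \<in> borel_measurable OffersM"
  shows "(\<lambda>z. h (snd z) (fst z)) \<in> borel_measurable (PathTimeM \<mu>)"
  unfolding PathTimeM_def
proof (rule measurable_compose_countable'[where f="\<lambda>i z. h i (fst z)" and g=snd and I=UNIV])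
  fix i :: nat assume "i \<in> UNIV" show "(\<lambda>z. h i (fst z)) \<in> borel_measurable (\<mu> \<Otimes>\<^sub>M count_space UNIV)"
    using assms(2)[of i] measurable_cong_sets[OF assms(1) refl] by (intro measurable_compose[OF measurable_fst]) auto
qed auto



lemma A1_bound:
  assumes "A1 xh v" "0 \<le> xh"
  shows "\<exists>K. \<forall>x\<in>{0..xh}. \<bar>v x\<bar> \<le> K"
proof -
  obtain g' where d: "\<forall>x\<in>{0..xh}. (v has_real_derivative g' x) (at x within {0..xh})"
    using assms(1) unfolding A1_def C1_on_interval_def by blast
  have "continuous_on {0..xh} v"
    using d by (auto simp: continuous_on_eq_continuous_within intro: DERIV_continuous)
  then have "compact (v ` {0..xh})" by (intro compact_continuous_image) auto
  then have "bounded (v ` {0..xh})" by (rule compact_imp_bounded)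
  then show ?thesis unfolding bounded_iff by auto
qed

lemma acc_meas:
  assumes "buyer_rule b"
  shows "acc_prob b t \<in> borel_measurable OffersM"
proof -
  have [measurable]: "\<And>k. b k \<in> borel_measurable OffersM" using assms unfolding buyer_rule_def by auto
  show ?thesis unfolding acc_prob_def by measurable
qed

lemma weight_props:
  assumes pr: "prob_space \<mu>" and se: "sets \<mu> = sets OffersM" and b: "buyer_rule b"
    and d: "0 \<le> \<delta>" "\<delta> \<le> 1"
  shows "(\<lambda>z. \<delta> ^ snd z * acc_prob b (snd z) (fst z)) \<in> borel_measurable (PathTimeM \<mu>)"
    and "integrable (PathTimeM \<mu>) (\<lambda>z. \<delta> ^ snd z * acc_prob b (snd z) (fst z))"
    and "(LINT z|PathTimeM \<mu>. \<delta> ^ snd z * acc_prob b (snd z) (fst z)) \<le> 1"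
proof -
  interpret prob_space \<mu> by fact
  have bb: "\<forall>k. 0 \<le> b k s \<and> b k s \<le> 1" for s using b unfolding buyer_rule_def by auto
  let ?w = "\<lambda>z. \<delta> ^ snd z * acc_prob b (snd z) (fst z)"
  show m: "?w \<in> borel_measurable (PathTimeM \<mu>)"
    using meas_PT[OF se, of "\<lambda>t s. \<delta> ^ t * acc_prob b t s"] acc_meas[OF b] by auto
  have nn: "0 \<le> ?w z" for z using acc_nonneg[OF bb] d by auto
  interpret C: sigma_finite_measure "count_space (UNIV::nat set)"
    by (rule sigma_finite_measure_count_space)
  have "(\<integral>\<^sup>+z. ennreal (?w z) \<partial>PathTimeM \<mu>) = (\<integral>\<^sup>+s. \<integral>\<^sup>+t. ennreal (?w (s,t)) \<partial>count_space UNIV \<partial>\<mu>)"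
    unfolding PathTimeM_def by (rule C.nn_integral_fst[symmetric]) (use m in \<open>simp add: PathTimeM_def\<close>)
  also have "\<dots> = (\<integral>\<^sup>+s. (\<Sum>t. ennreal (?w (s,t))) \<partial>\<mu>)"
    by (simp add: nn_integral_count_space_nat)
  also have "\<dots> \<le> (\<integral>\<^sup>+s. 1 \<partial>\<mu>)"
  proof (rule nn_integral_mono)
    fix s
    have "(\<Sum>t<n. ennreal (?w (s,t))) \<le> 1" for n
    proof -
      have e: "(\<Sum>t<n. ennreal (?w (s,t))) = ennreal (\<Sum>t<n. ?w (s,t))"
        using nn by (intro sum_ennreal) auto
      have "(\<Sum>t<n. ?w (s,t)) \<le> (\<Sum>t<n. acc_prob b t s)"
        using acc_nonneg[OF bb] d by (intro sum_mono) (auto intro!: mult_left_le_one_le power_le_one)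
      also have "\<dots> \<le> 1" by (rule acc_sum_le1[OF bb])
      finally show ?thesis unfolding e by (simp add: ennreal_leI)
    qed
    then show "(\<Sum>t. ennreal (?w (s,t))) \<le> 1"
      by (simp add: suminf_eq_SUP SUP_least)
  qed
  also have "\<dots> = 1" by (simp add: emeasure_space_1)
  finally have le: "(\<integral>\<^sup>+z. ennreal (?w z) \<partial>PathTimeM \<mu>) \<le> 1" .
  show int: "integrable (PathTimeM \<mu>) ?w"
    using le nn m by (intro integrableI_nonneg) (auto simp: top_unique intro: le_less_trans[OF le])
  have "ennreal (LINT z|PathTimeM \<mu>. ?w z) \<le> 1"
    using nn_integral_eq_integral[OF int] nn le by simp
  then show "(LINT z|PathTimeM \<mu>. ?w z) \<le> 1" by simp
qed



definition wt :: "real \<Rightarrow> (nat \<Rightarrow> offers \<Rightarrow> real) \<Rightarrow> offers \<times> nat \<Rightarrow> real" where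
  "wt \<delta> b z = \<delta> ^ snd z * acc_prob b (snd z) (fst z)"
definition gx :: "real \<Rightarrow> real \<Rightarrow> offers \<times> nat \<Rightarrow> real" where
  "gx xl xh z = max xl (min xh (fst (fst z (snd z))))"
definition rq :: "offers measure \<Rightarrow> real \<Rightarrow> (nat \<Rightarrow> offers \<Rightarrow> real) \<Rightarrow> real" where
  "rq \<mu> \<delta> b = (LINT z|PathTimeM \<mu>. wt \<delta> b z)"
definition rX :: "offers measure \<Rightarrow> real \<Rightarrow> real \<Rightarrow> real \<Rightarrow> (nat \<Rightarrow> offers \<Rightarrow> real) \<Rightarrow> real measure" where
  "rX \<mu> \<delta> xl xh b = (if rq \<mu> \<delta> b = 0 then return borel xl
     else distr (density (PathTimeM \<mu>) (\<lambda>z. ennreal (wt \<delta> b z / rq \<mu> \<delta> b))) borel (gx xl xh))"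

lemma uc_props:
  assumes K: "\<forall>x\<in>{0..xh}. \<bar>v x\<bar> \<le> K" and x: "0 < xl" "xl \<le> xh"
  shows "(\<lambda>y. util v (max xl (min xh y)) \<theta>) \<in> borel_measurable borel"
    and "\<bar>util v (max xl (min xh y)) \<theta>\<bar> \<le> K + \<bar>\<theta>\<bar> * xh"
proof -
  show "\<bar>util v (max xl (min xh y)) \<theta>\<bar> \<le> K + \<bar>\<theta>\<bar> * xh"
    using x by (intro util_bound[OF K]) auto
  have "mono (\<lambda>y. util v (max xl (min xh y)) \<theta>)"
    using x by (intro monoI util_mono[OF K]) auto
  then show "(\<lambda>y. util v (max xl (min xh y)) \<theta>) \<in> borel_measurable borel"
    by (rule borel_measurable_mono)
qed

lemma gx_meas:
  assumes "sets \<mu> = sets OffersM"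
  shows "gx xl xh \<in> borel_measurable (PathTimeM \<mu>)"
proof -
  have "(\<lambda>s. max xl (min xh (fst (s t)))) \<in> borel_measurable OffersM" for t
    using comp_meas(1)[of t] by measurable
  then show ?thesis unfolding gx_def
    using meas_PT[OF assms, of "\<lambda>t s. max xl (min xh (fst (s t)))"] by simp
qed

lemma replicate:
  assumes pr: "prob_space \<mu>" and se: "sets \<mu> = sets OffersM" and b: "buyer_rule b"
    and d: "0 \<le> \<delta>" "\<delta> \<le> 1"
    and K: "\<forall>x\<in>{0..xh}. \<bar>v x\<bar> \<le> K" and x: "0 < xl" "xl \<le> xh"
  shows "0 \<le> rq \<mu> \<delta> b" "rq \<mu> \<delta> b \<le> 1" "prob_space (rX \<mu> \<delta> xl xh b)"
    "sets (rX \<mu> \<delta> xl xh b) = sets borel" "AE x in rX \<mu> \<delta> xl xh b. x \<in> {xl..xh}"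
    "integrable (PathTimeM \<mu>) (\<lambda>z. wt \<delta> b z * util v (gx xl xh z) \<theta>)"
    "rq \<mu> \<delta> b * exp_util xl xh v (rX \<mu> \<delta> xl xh b) \<theta> =
       (LINT z|PathTimeM \<mu>. wt \<delta> b z * util v (gx xl xh z) \<theta>)"
proof -
  note W = weight_props[OF pr se b d, folded wt_def]
  have bb: "\<forall>k. 0 \<le> b k s \<and> b k s \<le> 1" for s using b unfolding buyer_rule_def by auto
  have nn: "0 \<le> wt \<delta> b z" for z using acc_nonneg[OF bb] d by (auto simp: wt_def)
  show q0: "0 \<le> rq \<mu> \<delta> b" unfolding rq_def using nn by (intro integral_nonneg_AE) auto
  show "rq \<mu> \<delta> b \<le> 1" unfolding rq_def using W(3) .
  have gm[measurable]: "gx xl xh \<in> borel_measurable (PathTimeM \<mu>)" by (rule gx_meas[OF se])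
  note ucm[measurable] = uc_props(1)[OF K x]
  have ucb: "\<bar>util v (max xl (min xh y)) th\<bar> \<le> K + \<bar>th\<bar> * xh" for y th by (rule uc_props(2)[OF K x])
  have gcl: "max xl (min xh (gx xl xh z)) = gx xl xh z" for z using x by (auto simp: gx_def)
  have um: "(\<lambda>z. util v (gx xl xh z) \<theta>) \<in> borel_measurable (PathTimeM \<mu>)"
    using measurable_compose[OF gm ucm] by (simp add: gcl)
  have wm[measurable]: "wt \<delta> b \<in> borel_measurable (PathTimeM \<mu>)" using W(1) by (simp add: wt_def[abs_def])
  show int: "integrable (PathTimeM \<mu>) (\<lambda>z. wt \<delta> b z * util v (gx xl xh z) \<theta>)"
  proof (rule Bochner_Integration.integrable_bound[where f="\<lambda>z. (K + \<bar>\<theta>\<bar> * xh) * wt \<delta> b z"])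
    show "integrable (PathTimeM \<mu>) (\<lambda>z. (K + \<bar>\<theta>\<bar> * xh) * wt \<delta> b z)" using W(2) by simp
    show "(\<lambda>z. wt \<delta> b z * util v (gx xl xh z) \<theta>) \<in> borel_measurable (PathTimeM \<mu>)" using um by measurable
    show "AE z in PathTimeM \<mu>. norm (wt \<delta> b z * util v (gx xl xh z) \<theta>) \<le> norm ((K + \<bar>\<theta>\<bar> * xh) * wt \<delta> b z)"
    proof (intro AE_I2)
      fix z
      have ub: "\<bar>util v (gx xl xh z) \<theta>\<bar> \<le> K + \<bar>\<theta>\<bar> * xh" using ucb[of "gx xl xh z" \<theta>] by (simp add: gcl)
      then show "norm (wt \<delta> b z * util v (gx xl xh z) \<theta>) \<le> norm ((K + \<bar>\<theta>\<bar> * xh) * wt \<delta> b z)"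
        using nn[of z] ub mult_right_mono[OF ub nn[of z]] by (simp add: abs_mult mult.commute)
    qed
  qed
  have "prob_space (rX \<mu> \<delta> xl xh b) \<and> sets (rX \<mu> \<delta> xl xh b) = sets borel \<and> (AE x in rX \<mu> \<delta> xl xh b. x \<in> {xl..xh}) \<and>
     rq \<mu> \<delta> b * exp_util xl xh v (rX \<mu> \<delta> xl xh b) \<theta> = (LINT z|PathTimeM \<mu>. wt \<delta> b z * util v (gx xl xh z) \<theta>)"
  proof (cases "rq \<mu> \<delta> b = 0")
    case True
    have "AE z in PathTimeM \<mu>. wt \<delta> b z = 0"
      using True W(2) nn unfolding rq_def by (subst integral_nonneg_eq_0_iff_AE[symmetric]) (auto simp: wt_def[abs_def])
    then have "(LINT z|PathTimeM \<mu>. wt \<delta> b z * util v (gx xl xh z) \<theta>) = 0"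
      by (intro integral_eq_zero_AE) auto
    moreover have "AE x in return borel xl. x \<in> {xl..xh}" using x by (subst AE_return) auto
    moreover have Xr: "rX \<mu> \<delta> xl xh b = return borel xl" using True by (simp add: rX_def)
    ultimately show ?thesis using True unfolding Xr by (simp add: prob_space_return)
  next
    case False
    then have qp: "0 < rq \<mu> \<delta> b" using q0 by auto
    let ?D = "density (PathTimeM \<mu>) (\<lambda>z. ennreal (wt \<delta> b z / rq \<mu> \<delta> b))"
    have X: "rX \<mu> \<delta> xl xh b = distr ?D borel (gx xl xh)" using False by (simp add: rX_def)
    have iq: "integrable (PathTimeM \<mu>) (\<lambda>z. wt \<delta> b z / rq \<mu> \<delta> b)" using W(2) by (simp add: wt_def[abs_def])
    have "emeasure ?D (space ?D) = (\<integral>\<^sup>+z. ennreal (wt \<delta> b z / rq \<mu> \<delta> b) \<partial>PathTimeM \<mu>)"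
      by (simp add: emeasure_density)
    also have "\<dots> = ennreal (LINT z|PathTimeM \<mu>. wt \<delta> b z / rq \<mu> \<delta> b)"
      using nn qp by (intro nn_integral_eq_integral[OF iq]) auto
    also have "(LINT z|PathTimeM \<mu>. wt \<delta> b z / rq \<mu> \<delta> b) = 1"
      using qp by (simp add: rq_def)
    finally have "prob_space ?D" by (intro prob_spaceI) simp
    then have P: "prob_space (rX \<mu> \<delta> xl xh b)" unfolding X by (intro prob_space.prob_space_distr) auto
    have AE: "AE x in rX \<mu> \<delta> xl xh b. x \<in> {xl..xh}"
      unfolding X using x by (subst AE_distr_iff) (auto simp: gx_def)
    have "exp_util xl xh v (rX \<mu> \<delta> xl xh b) \<theta> = (LINT z|?D. util v (max xl (min xh (gx xl xh z))) \<theta>)"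
      unfolding exp_util_def X by (rule integral_distr) auto
    also have "\<dots> = (LINT z|PathTimeM \<mu>. (wt \<delta> b z / rq \<mu> \<delta> b) * util v (gx xl xh z) \<theta>)"
      using nn qp unfolding gcl by (subst integral_density) (auto intro!: um)
    also have "\<dots> = (LINT z|PathTimeM \<mu>. wt \<delta> b z * util v (gx xl xh z) \<theta>) / rq \<mu> \<delta> b"
      by simp
    finally show ?thesis using P AE qp X by simp
  qed
  then show "prob_space (rX \<mu> \<delta> xl xh b)" "sets (rX \<mu> \<delta> xl xh b) = sets borel"
    "AE x in rX \<mu> \<delta> xl xh b. x \<in> {xl..xh}"
    "rq \<mu> \<delta> b * exp_util xl xh v (rX \<mu> \<delta> xl xh b) \<theta> = (LINT z|PathTimeM \<mu>. wt \<delta> b z * util v (gx xl xh z) \<theta>)"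
    by auto
qed



lemma typeM_props:
  assumes "A2 tlo thi F f" "tlo \<le> thi"
  shows "finite_measure (typeM tlo thi f)" "AE \<theta> in typeM tlo thi f. \<theta> \<in> {tlo..thi}"
    "sets (typeM tlo thi f) = sets borel"
proof -
  have fm[measurable]: "f \<in> borel_measurable borel" using assms(1) unfolding A2_def by auto
  obtain m Mb where mM: "0 < m" "\<forall>\<theta>\<in>{tlo..thi}. m \<le> f \<theta> \<and> f \<theta> \<le> Mb"
    using assms(1) unfolding A2_def by auto
  have dm: "(\<lambda>\<theta>. ennreal (indicator {tlo..thi} \<theta> * f \<theta>)) \<in> borel_measurable lborel" by measurable
  have "emeasure (typeM tlo thi f) (space (typeM tlo thi f)) =
      (\<integral>\<^sup>+\<theta>. ennreal (indicator {tlo..thi} \<theta> * f \<theta>) \<partial>lborel)"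
    unfolding typeM_def by (subst emeasure_density[OF dm]) auto
  also have "\<dots> \<le> (\<integral>\<^sup>+\<theta>. ennreal Mb * indicator {tlo..thi} \<theta> \<partial>lborel)"
    using mM by (intro nn_integral_mono) (auto simp: indicator_def intro!: ennreal_leI)
  also have "\<dots> = ennreal Mb * emeasure lborel {tlo..thi}" by (rule nn_integral_cmult_indicator) auto
  also have "\<dots> < \<infinity>" using assms(2) by (simp add: ennreal_mult_less_top)
  finally show "finite_measure (typeM tlo thi f)" by (intro finite_measureI) auto
  show "AE \<theta> in typeM tlo thi f. \<theta> \<in> {tlo..thi}"
    unfolding typeM_def by (subst AE_density[OF dm]) (auto simp: indicator_def)
  show "sets (typeM tlo thi f) = sets borel" by (simp add: typeM_def)
qed



lemma exp_util_bound:
  assumes "prob_space X" "\<And>x. \<bar>util v (max xl (min xh x)) \<theta>\<bar> \<le> B"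
  shows "\<bar>exp_util xl xh v X \<theta>\<bar> \<le> B"
proof -
  interpret prob_space X by fact
  have B0: "0 \<le> B" using assms(2)[of 0] by linarith
  have "norm (exp_util xl xh v X \<theta>) \<le> (LINT x|X. norm (util v (max xl (min xh x)) \<theta>))"
    unfolding exp_util_def by (rule integral_norm_bound)
  also have "\<dots> \<le> (LINT x|X. B)" using assms(2) B0 by (intro integral_mono') auto
  also have "\<dots> = B" by (simp add: prob_space)
  finally show ?thesis by simp
qed

theorem corollary1:
  fixes tlo thi xl xh \<delta> :: real and F f v :: "real \<Rightarrow> real"
    and \<mu> :: "offers measure" and \<beta> :: "real \<Rightarrow> nat \<Rightarrow> offers \<Rightarrow> real"
  assumes "tlo < thi" and "0 < xl" and "xl < xh"
    and "A1 xh v" and "A2 tlo thi F f" and "A3 tlo xl xh v" and "A4 tlo thi xh F f v"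
    and "0 \<le> \<delta>" and "\<delta> < 1"
    and "seller_strategy xl xh \<mu>"
    and "buyer_strategy \<beta>"
    and "\<forall>\<theta>\<in>{tlo..thi}. best_response xl xh v \<delta> \<mu> \<theta> (\<beta> \<theta>)"
    and "integrable (typeM tlo thi f \<Otimes>\<^sub>M PathTimeM \<mu>) (seller_flow \<delta> \<beta>)"
  shows "seller_payoff tlo thi f \<delta> \<mu> \<beta> \<le> static_rev tlo thi xl xh f v"
proof -
  note tl = assms(1) and x = assms(2,3) and d = assms(8,9) and BR = assms(12) and SI = assms(13)
  have pr: "prob_space \<mu>" and se: "sets \<mu> = sets OffersM"
    using assms(10) unfolding seller_strategy_def by auto
  have d1: "\<delta> \<le> 1" and xle: "xl \<le> xh" using d x by auto
  have br: "buyer_rule (\<beta> \<theta>)" for \<theta> using assms(11) unfolding buyer_strategy_def by auto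
  obtain K where K: "\<forall>x\<in>{0..xh}. \<bar>v x\<bar> \<le> K" using A1_bound[OF assms(4)] x by auto
  have K0: "0 \<le> K" using K x by force
  note T = typeM_props[OF assms(5)] tl
  let ?T = "typeM tlo thi f" and ?P = "PathTimeM \<mu>"
  interpret TF: finite_measure ?T using T(1) tl by simp
  have sfP: "sigma_finite_measure ?P" unfolding PathTimeM_def
    by (intro sigma_finite_pair_measure prob_space_imp_sigma_finite pr sigma_finite_measure_count_space)
  interpret PS: pair_sigma_finite ?T ?P
    by (intro pair_sigma_finite.intro TF.sigma_finite_measure_axioms sfP)
  define q where "q \<theta> = rq \<mu> \<delta> (\<beta> \<theta>)" for \<theta>
  define X where "X \<theta> = rX \<mu> \<delta> xl xh (\<beta> \<theta>)" for \<theta>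
  define p where "p \<theta> = (LINT z|?P. seller_flow \<delta> \<beta> (\<theta>, z))" for \<theta>
  define pp where "pp b z = wt \<delta> b z * snd (fst z (snd z))" for b z
  define U where "U \<theta> \<theta>' = (LINT z|?P. wt \<delta> (\<beta> \<theta>) z * util v (gx xl xh z) \<theta>')" for \<theta> \<theta>'
  have R': "0 \<le> q \<theta>" "q \<theta> \<le> 1" "prob_space (X \<theta>)" "sets (X \<theta>) = sets borel"
    "AE x in X \<theta>. x \<in> {xl..xh}"
    "integrable ?P (\<lambda>z. wt \<delta> (\<beta> \<theta>) z * util v (gx xl xh z) \<theta>')"
    "q \<theta> * exp_util xl xh v (X \<theta>) \<theta>' = U \<theta> \<theta>'" for \<theta> \<theta>'
    using replicate[OF pr se br[of \<theta>] d(1) d1 K x(1) xle]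
    unfolding q_def X_def U_def by auto
  have bf: "buyer_flow xl xh v \<delta> \<theta> b = (\<lambda>z. wt \<delta> b z * util v (gx xl xh z) \<theta> - pp b z)" for \<theta> b
    by (auto simp: fun_eq_iff buyer_flow_def wt_def gx_def pp_def algebra_simps)
  have sf: "(\<lambda>z. seller_flow \<delta> \<beta> (\<theta>, z)) = pp (\<beta> \<theta>)" for \<theta>
    by (auto simp: fun_eq_iff seller_flow_def wt_def pp_def)
  have ppi: "integrable ?P (pp (\<beta> \<theta>))" if "\<theta> \<in> {tlo..thi}" for \<theta>
  proof -
    have i1: "integrable ?P (buyer_flow xl xh v \<delta> \<theta> (\<beta> \<theta>))" using BR that unfolding best_response_def by auto
    show ?thesis using Bochner_Integration.integrable_diff[OF R'(6)[of \<theta> \<theta>] i1[unfolded bf]] by simp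
  qed
  have bfi: "integrable ?P (buyer_flow xl xh v \<delta> \<theta> (\<beta> \<theta>'))" 
    and bfv: "buyer_payoff xl xh v \<delta> \<mu> \<theta> (\<beta> \<theta>') = U \<theta>' \<theta> - p \<theta>'"
    if "\<theta>' \<in> {tlo..thi}" for \<theta> \<theta>'
  proof -
    show "integrable ?P (buyer_flow xl xh v \<delta> \<theta> (\<beta> \<theta>'))"
      unfolding bf by (rule Bochner_Integration.integrable_diff[OF R'(6) ppi[OF that]])
    show "buyer_payoff xl xh v \<delta> \<mu> \<theta> (\<beta> \<theta>') = U \<theta>' \<theta> - p \<theta>'"
      unfolding buyer_payoff_def bf U_def p_def sf by (rule Bochner_Integration.integral_diff[OF R'(6) ppi[OF that]])
  qed
  have mech: "mechanism tlo thi xl xh q X" unfolding mechanism_def using R' by auto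
  have IC: "IC tlo thi xl xh v q X p" unfolding IC_def
  proof (intro ballI)
    fix \<theta> \<theta>' assume th: "\<theta> \<in> {tlo..thi}" "\<theta>' \<in> {tlo..thi}"
    have "buyer_payoff xl xh v \<delta> \<mu> \<theta> (\<beta> \<theta>') \<le> buyer_payoff xl xh v \<delta> \<mu> \<theta> (\<beta> \<theta>)"
      using BR th br bfi[OF th(2)] unfolding best_response_def by blast
    then show "q \<theta>' * exp_util xl xh v (X \<theta>') \<theta> - p \<theta>' \<le> q \<theta> * exp_util xl xh v (X \<theta>) \<theta> - p \<theta>"
      using bfv[OF th(2)] bfv[OF th(1)] R'(7) by simp
  qed
  have IR: "IR tlo thi xl xh v q X p" unfolding IR_def
  proof (intro ballI)
    fix \<theta> assume th: "\<theta> \<in> {tlo..thi}"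
    define b0 where "b0 = (\<lambda>(t::nat) (s::offers). 0::real)"
    have b0r: "buyer_rule b0" unfolding buyer_rule_def b0_def by auto
    have b0f: "buyer_flow xl xh v \<delta> \<theta> b0 = (\<lambda>z. 0)"
      by (auto simp: fun_eq_iff buyer_flow_def acc_prob_def b0_def)
    have "buyer_payoff xl xh v \<delta> \<mu> \<theta> b0 \<le> buyer_payoff xl xh v \<delta> \<mu> \<theta> (\<beta> \<theta>)"
      using BR th b0r b0f unfolding best_response_def by auto
    moreover have "buyer_payoff xl xh v \<delta> \<mu> \<theta> b0 = 0" unfolding buyer_payoff_def b0f by simp
    ultimately show "0 \<le> q \<theta> * exp_util xl xh v (X \<theta>) \<theta> - p \<theta>"
      using bfv[OF th, of \<theta>] R'(7) by simp
  qed
  have pint: "integrable ?T p" unfolding p_def by (rule PS.integrable_fst'[OF SI])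
  have rev: "seller_payoff tlo thi f \<delta> \<mu> \<beta> = (LINT \<theta>|?T. p \<theta>)"
    unfolding seller_payoff_def p_def by (rule PS.integral_fst'[OF SI, symmetric])
  define Bt where "Bt = K + max \<bar>tlo\<bar> \<bar>thi\<bar> * xh"
  have Bt0: "0 \<le> Bt" unfolding Bt_def using K0 x by auto
  let ?S = "{(LINT \<theta>|?T. p \<theta>) | q X p. mechanism tlo thi xl xh q X \<and> IC tlo thi xl xh v q X p \<and>
       IR tlo thi xl xh v q X p \<and> integrable ?T p}"
  have bdd: "bdd_above ?S"
  proof (rule bdd_aboveI[of _ "Bt * measure ?T (space ?T)"])
    fix r assume "r \<in> ?S"
    then obtain q' X' p' where r: "r = (LINT \<theta>|?T. p' \<theta>)" and m': "mechanism tlo thi xl xh q' X'"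
      and ir': "IR tlo thi xl xh v q' X' p'" by blast
    have pb: "p' \<theta> \<le> Bt" if th: "\<theta> \<in> {tlo..thi}" for \<theta>
    proof -
      have ub: "\<bar>util v (max xl (min xh y)) \<theta>\<bar> \<le> Bt" for y
      proof -
        have "\<bar>util v (max xl (min xh y)) \<theta>\<bar> \<le> K + \<bar>\<theta>\<bar> * xh" by (rule uc_props(2)[OF K x(1)]) (use x in auto)
        moreover have "\<bar>\<theta>\<bar> * xh \<le> max \<bar>tlo\<bar> \<bar>thi\<bar> * xh" using th x by (intro mult_right_mono) auto
        ultimately show ?thesis unfolding Bt_def by linarith
      qed
      have e: "\<bar>exp_util xl xh v (X' \<theta>) \<theta>\<bar> \<le> Bt"
        using m' th ub unfolding mechanism_def by (intro exp_util_bound) auto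
      have qq: "0 \<le> q' \<theta>" "q' \<theta> \<le> 1" using m' th unfolding mechanism_def by auto
      have "q' \<theta> * exp_util xl xh v (X' \<theta>) \<theta> \<le> Bt"
      proof -
        have "q' \<theta> * exp_util xl xh v (X' \<theta>) \<theta> \<le> \<bar>q' \<theta>\<bar> * \<bar>exp_util xl xh v (X' \<theta>) \<theta>\<bar>"
          by (metis abs_ge_self abs_mult)
        also have "\<dots> \<le> 1 * Bt" using qq e by (intro mult_mono) auto
        finally show ?thesis by simp
      qed
      then show ?thesis using ir' th unfolding IR_def by fastforce
    qed
    have "(LINT \<theta>|?T. p' \<theta>) \<le> (LINT \<theta>|?T. Bt)"
    proof (rule integral_mono_AE')
      have AEI: "AE \<theta> in ?T. \<theta> \<in> {tlo..thi}" using typeM_props(2)[OF assms(5)] tl by simp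
      show "AE \<theta> in ?T. p' \<theta> \<le> Bt" using AEI by (rule AE_mp) (use pb in auto)
    qed (use Bt0 in auto)
    then show "r \<le> Bt * measure ?T (space ?T)" using r by (simp add: mult.commute)
  qed
  have "seller_payoff tlo thi f \<delta> \<mu> \<beta> \<in> ?S" unfolding rev using mech IC IR pint by blast
  then show ?thesis unfolding static_rev_def using bdd by (rule cSup_upper)
qed


end
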